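(* Let $f\in\mathbb{R}[x]$ be a polynomial of degree $n$ with $n$ simple roots, and let $g\in\mathbb{R}[x]$ have degree $<n$ and satisfy $g(\xi)>0$ at every real root $\xi$ of $f$. Then there exists a pair $(Q,q)$ with $Q\in\mathbb{R}^{n\times n}$ symmetric positive definite and $q\in\mathbb{R}[x]$ of degree $\le n-2$ such that $g=\mathbf{x}^TQ\,\mathbf{x}+q\,f$. In particular $Q$ lies in the interior of the cone of $n\times n$ real symmetric positive semidefinite matrices.
   Context: $\mathbf{x}=[1,x,\dots,x^{n-1}]^T$ denotes the column vector of monomials of degree $<n$. *)

theory Defs
  imports Complex_Main "HOL-Computational_Algebra.Polynomial"
begin

text \<open>n x n real matrices are represented as functions nat => nat => real,
  only the entries with indices below n being relevant.\<close>

definition sym_mat :: "nat \<Rightarrow> (nat \<Rightarrow> nat \<Rightarrow> real) \<Rightarrow> bool" where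
  "sym_mat n Q \<longleftrightarrow> (\<forall>i<n. \<forall>j<n. Q i j = Q j i)"

definition pos_def_mat :: "nat \<Rightarrow> (nat \<Rightarrow> nat \<Rightarrow> real) \<Rightarrow> bool" where
  "pos_def_mat n Q \<longleftrightarrow>
     (\<forall>v :: nat \<Rightarrow> real. (\<exists>i<n. v i \<noteq> 0) \<longrightarrow> (\<Sum>i<n. \<Sum>j<n. v i * Q i j * v j) > 0)"

text \<open>The polynomial x^T Q x where x = [1, x, ..., x^(n-1)]^T.\<close>
definition gram_poly :: "nat \<Rightarrow> (nat \<Rightarrow> nat \<Rightarrow> real) \<Rightarrow> real poly" where
  "gram_poly n Q = (\<Sum>i<n. \<Sum>j<n. monom (Q i j) (i + j))"

end

theory Submission
  imports Defs
begin

abbreviation rc :: "real poly \<Rightarrow> complex poly" where "rc p \<equiv> map_poly of_real p"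

lemma rc_add: "rc (p + q) = rc p + rc q"
  by (intro poly_eqI) (simp add: coeff_map_poly)
lemma rc_diff: "rc (p - q) = rc p - rc q"
  by (intro poly_eqI) (simp add: coeff_map_poly)
lemma rc_mult: "rc (p * q) = rc p * rc q"
  by (intro poly_eqI) (simp add: coeff_map_poly coeff_mult)
lemma rc_eq0: "rc p = 0 \<longleftrightarrow> p = 0"
  by (simp add: map_poly_eq_0_iff)
lemma rc_real: "poly (rc p) (of_real x) = of_real (poly p x)"
  by (induction p) (auto simp: map_poly_pCons)
lemma poly_cnj2: "poly (map_poly cnj p) w = cnj (poly p (cnj w))"
  by (induction p) (auto simp: map_poly_pCons)
lemma rc_cnj: "poly (rc p) (cnj w) = cnj (poly (rc p) w)"
proof -
  have "map_poly cnj (rc p) = rc p" by (intro poly_eqI) (simp add: coeff_map_poly)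
  then show ?thesis using poly_cnj2[of "rc p" "cnj w"] by simp
qed
lemma degree_rc: "degree (rc p) = degree p"
  by (simp add: degree_map_poly)

lemma lagrange:
  fixes Z :: "complex set" and s :: "complex \<Rightarrow> complex"
  assumes "finite Z" "Z \<noteq> {}"
  shows "\<exists>L. degree L < card Z \<and> (\<forall>z\<in>Z. poly L z = s z)"
proof -
  define P where "P z = (\<Prod>w\<in>Z-{z}. [:-w,1:])" for z
  have degP: "degree (P z) < card Z" if "z \<in> Z" for z
  proof -
    have "degree (P z) \<le> sum (degree \<circ> (\<lambda>w. [:-w,1:])) (Z-{z})"
      unfolding P_def by (rule degree_prod_sum_le) (use assms in auto)
    also have "\<dots> = card (Z - {z})" by simp
    also have "\<dots> < card Z" using assms that by (meson card_Diff1_less)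
    finally show ?thesis .
  qed
  have evP: "poly (P z) x = (\<Prod>w\<in>Z-{z}. x - w)" for z x
    unfolding P_def by (simp add: poly_prod)
  have nz: "poly (P z) z \<noteq> 0" if "z \<in> Z" for z
    unfolding evP using assms by auto
  have zero: "poly (P z) y = 0" if "y \<in> Z" "y \<noteq> z" for z y
    unfolding evP using assms that by (intro prod_zero) auto
  define L where "L = (\<Sum>z\<in>Z. smult (s z / poly (P z) z) (P z))"
  have "degree L < card Z"
    unfolding L_def using degP assms
    by (intro degree_sum_less) (auto intro: le_less_trans[OF degree_smult_le] simp: card_gt_0_iff)
  moreover have "poly L y = s y" if "y \<in> Z" for y
  proof -
    have "poly L y = (\<Sum>z\<in>Z. s z / poly (P z) z * poly (P z) y)"
      unfolding L_def by (simp add: poly_sum)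
    also have "\<dots> = s y / poly (P y) y * poly (P y) y
        + (\<Sum>z\<in>Z-{y}. s z / poly (P z) z * poly (P z) y)"
      using assms(1) that by (rule sum.remove)
    also have "(\<Sum>z\<in>Z-{y}. s z / poly (P z) z * poly (P z) y) = 0"
      using zero[OF that] by (intro sum.neutral) auto
    also have "s y / poly (P y) y * poly (P y) y + 0 = s y / poly (P y) y * poly (P y) y" by simp
    also have "\<dots> = s y" using nz[OF that] by simp
    finally show ?thesis .
  qed
  ultimately show ?thesis by blast
qed

lemma real_interp:
  fixes Z :: "complex set" and s :: "complex \<Rightarrow> complex"
  assumes "finite Z" "Z \<noteq> {}" "\<And>z. z \<in> Z \<Longrightarrow> cnj z \<in> Z"
    "\<And>z. z \<in> Z \<Longrightarrow> s (cnj z) = cnj (s z)"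
  shows "\<exists>p. degree p < card Z \<and> (\<forall>z\<in>Z. poly (rc p) z = s z)"
proof -
  obtain L where L: "degree L < card Z" "\<forall>z\<in>Z. poly L z = s z"
    using lagrange[OF assms(1,2)] by blast
  define p where "p = map_poly Re L"
  have deg: "degree p < card Z"
    proof -
    have "degree p \<le> degree L" unfolding p_def
      by (rule degree_le) (simp add: coeff_map_poly coeff_eq_0)
    then show ?thesis using L(1) by simp
  qed
  have eq: "rc p = smult (1/2) (L + map_poly cnj L)"
    unfolding p_def by (intro poly_eqI) (simp add: coeff_map_poly complex_add_cnj)
  have "poly (rc p) z = s z" if "z \<in> Z" for z
  proof -
    have "poly (rc p) z = (poly L z + cnj (poly L (cnj z))) / 2"
      unfolding eq by (simp add: poly_cnj2)
    also have "\<dots> = s z" using L(2) assms(3,4) that by simp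
    finally show ?thesis .
  qed
  with deg show ?thesis by blast
qed

lemma square_gram:
  fixes p :: "real poly"
  assumes "degree p < n"
  shows "p * p = (\<Sum>i<n. \<Sum>j<n. monom (coeff p i * coeff p j) (i + j))"
proof -
  have "p = (\<Sum>i<n. monom (coeff p i) i)"
  proof -
    have "(\<Sum>i\<le>n - 1. monom (coeff p i) i) = p"
      using assms by (intro poly_as_sum_of_monoms') auto
    moreover have "{..n-1} = {..<n}" using assms by auto
    ultimately show ?thesis by simp
  qed
  then have "p * p = (\<Sum>i<n. monom (coeff p i) i) * (\<Sum>j<n. monom (coeff p j) j)" by simp
  also have "\<dots> = (\<Sum>i<n. \<Sum>j<n. monom (coeff p i) i * monom (coeff p j) j)"
    by (rule sum_product)
  finally show ?thesis by (simp add: mult_monom)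
qed

lemma gram_eq:
  fixes p :: "real poly"
  assumes "degree p < n"
  shows "gram_poly n (\<lambda>i j. (if i = j then e else 0) + coeff p i * coeff p j)
     = (\<Sum>k<n. monom e (2*k)) + p * p"
proof -
  have "gram_poly n (\<lambda>i j. (if i = j then e else 0) + coeff p i * coeff p j)
     = (\<Sum>i<n. \<Sum>j<n. monom (if i = j then e else 0) (i + j)) + (\<Sum>i<n. \<Sum>j<n. monom (coeff p i * coeff p j) (i + j))"
    unfolding gram_poly_def by (simp add: add_monom[symmetric] sum.distrib)
  also have "(\<Sum>i<n. \<Sum>j<n. monom (if i = j then e else 0) (i + j)) = (\<Sum>k<n. monom e (2*k))"
  proof (rule sum.cong[OF refl])
    fix i assume "i \<in> {..<n}"
    then have "(\<Sum>j<n. monom (if i = j then e else 0) (i + j)) = (\<Sum>j<n. if j = i then monom e (i+j) else 0)"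
      by (intro sum.cong) auto
    also have "\<dots> = monom e (2*i)" using \<open>i \<in> {..<n}\<close> by (simp add: mult_2)
    finally show "(\<Sum>j<n. monom (if i = j then e else 0) (i + j)) = monom e (2*i)" .
  qed
  finally show ?thesis using square_gram[OF assms] by simp
qed

lemma gram_degree:
  assumes "n > 0"
  shows "degree (gram_poly n Q) \<le> 2*n - 2"
  unfolding gram_poly_def
  by (intro degree_sum_le) (auto intro!: order.trans[OF degree_monom_le])

lemma gram_posdef:
  fixes p :: "real poly" and e :: real
  assumes "e > 0"
  shows "pos_def_mat n (\<lambda>i j. (if i = j then e else 0) + coeff p i * coeff p j)"
  unfolding pos_def_mat_def
proof (intro allI impI)
  fix v :: "nat \<Rightarrow> real" assume "\<exists>i<n. v i \<noteq> 0"
  then obtain i0 where i0: "i0 < n" "v i0 \<noteq> 0" by blast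
  have A: "(\<Sum>i<n. \<Sum>j<n. v i * (if i = j then e else 0) * v j) = (\<Sum>i<n. e * (v i)^2)"
  proof (rule sum.cong[OF refl])
    fix i assume i: "i \<in> {..<n}"
    have "(\<Sum>j<n. v i * (if i = j then e else 0) * v j) = (\<Sum>j<n. if j = i then e * (v i)^2 else 0)"
      by (intro sum.cong) (auto simp: power2_eq_square)
    also have "\<dots> = e * (v i)^2" using i by simp
    finally show "(\<Sum>j<n. v i * (if i = j then e else 0) * v j) = e * (v i)^2" .
  qed
  have B: "(\<Sum>i<n. \<Sum>j<n. v i * (coeff p i * coeff p j) * v j) = (\<Sum>i<n. v i * coeff p i)^2"
    unfolding power2_eq_square sum_product by (simp add: algebra_simps)
  have eq: "(\<Sum>i<n. \<Sum>j<n. v i * ((if i = j then e else 0) + coeff p i * coeff p j) * v j)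
     = (\<Sum>i<n. e * (v i)^2) + (\<Sum>i<n. v i * coeff p i)^2"
    unfolding A[symmetric] B[symmetric] by (simp add: distrib_left distrib_right sum.distrib)
  have "(\<Sum>i<n. e * (v i)^2) > 0"
  proof -
    have "e * (v i0)^2 \<le> (\<Sum>i<n. e * (v i)^2)"
      using i0 assms by (intro member_le_sum) auto
    moreover have "e * (v i0)^2 > 0" using i0 assms by auto
    ultimately show ?thesis by linarith
  qed
  then show "(\<Sum>i<n. \<Sum>j<n. v i * ((if i = j then e else 0) + coeff p i * coeff p j) * v j) > 0"
    unfolding eq by (smt (verit) zero_le_power2)
qed

theorem mainTheorem3:
  fixes f g :: "real poly" and n :: nat
  assumes "degree f = n"
    and "card {z :: complex. poly (map_poly of_real f) z = 0} = n"
    and "degree g < n"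
    and "\<And>\<xi> :: real. poly f \<xi> = 0 \<Longrightarrow> poly g \<xi> > 0"
  shows "\<exists>(Q :: nat \<Rightarrow> nat \<Rightarrow> real) (q :: real poly).
           sym_mat n Q \<and> pos_def_mat n Q \<and> (q = 0 \<or> degree q + 2 \<le> n) \<and>
           g = gram_poly n Q + q * f"
proof -
  have npos: "n > 0" using assms(3) by simp
  have fnz: "f \<noteq> 0" using assms(1) npos by auto
  define Z where "Z = {z :: complex. poly (rc f) z = 0}"
  have Zfin: "finite Z" unfolding Z_def using fnz rc_eq0 by (intro poly_roots_finite) auto
  have Zcard: "card Z = n" using assms(2) unfolding Z_def .
  have Zne: "Z \<noteq> {}" using Zcard npos by auto
  have Zcnj: "cnj z \<in> Z" if "z \<in> Z" for z
    using that unfolding Z_def by (simp add: rc_cnj)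
  define R where "R = {x :: real. poly f x = 0}"
  have Rfin: "finite R" unfolding R_def using fnz by (rule poly_roots_finite)
  define S where "S x = (\<Sum>k<n. x ^ (2*k))" for x :: real
  have ev: "\<forall>\<^sub>F e in at_right 0. \<forall>x\<in>R. e * S x < poly g x"
  proof (rule eventually_ball_finite[OF Rfin], rule ballI)
    fix x assume "x \<in> R"
    then have gx: "poly g x > 0" using assms(4) unfolding R_def by auto
    have "((\<lambda>e. e * S x) \<longlongrightarrow> 0 * S x) (at_right 0)"
      by (intro tendsto_intros)
    then show "\<forall>\<^sub>F e in at_right 0. e * S x < poly g x"
      using gx by (intro order_tendstoD(2)) auto
  qed
  then obtain b :: real where b: "b > 0" "\<And>y. y > 0 \<Longrightarrow> y < b \<Longrightarrow> \<forall>x\<in>R. y * S x < poly g x"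
    unfolding eventually_at_right_field by blast
  define e where "e = b / 2"
  have epos: "e > 0" and eR: "\<forall>x\<in>R. e * S x < poly g x" proof -
    show "e > 0" using b unfolding e_def by auto
    show "\<forall>x\<in>R. e * S x < poly g x" using b(2)[of e] b(1) unfolding e_def by auto
  qed
  define h where "h = g - (\<Sum>k<n. monom e (2*k))"
  have polyh: "poly h x = poly g x - e * S x" for x
    unfolding h_def S_def by (simp add: poly_sum poly_monom sum_distrib_left)
  define H where "H w = poly (rc h) w" for w
  have Hcnj: "H (cnj w) = cnj (H w)" for w unfolding H_def by (rule rc_cnj)
  define s where "s w = (if Im w = 0 then complex_of_real (sqrt (Re (H w)))
      else if Im w > 0 then csqrt (H w) else cnj (csqrt (H (cnj w))))" for w
  have s_sq: "s w * s w = H w" if "w \<in> Z" for w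
  proof (cases "Im w = 0")
    case True
    then have w: "w = of_real (Re w)" by (simp add: complex_eq_iff)
    have "poly (rc f) (of_real (Re w)) = 0" using that w unfolding Z_def by simp
    then have "poly f (Re w) = 0" unfolding rc_real by simp
    then have pos: "poly h (Re w) > 0" using eR unfolding R_def polyh by auto
    have Hw: "H w = of_real (poly h (Re w))" unfolding H_def by (subst w) (simp add: rc_real)
    show ?thesis using True pos unfolding s_def Hw
      by (simp flip: of_real_mult)
  next
    case False
    then show ?thesis
    proof (cases "Im w > 0")
      case True then show ?thesis using False unfolding s_def
        by (simp flip: power2_eq_square)
    next
      case F2: False
      have "s w * s w = cnj ((csqrt (H (cnj w)))^2)"
        using False F2 unfolding s_def by (simp add: power2_eq_square)
      also have "\<dots> = H w" by (simp add: Hcnj)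
      finally show ?thesis .
    qed
  qed
  have s_cnj: "s (cnj w) = cnj (s w)" for w
    unfolding s_def by (auto simp: Hcnj)
  obtain p where p: "degree p < n" "\<And>z. z \<in> Z \<Longrightarrow> poly (rc p) z = s z"
    using real_interp[of Z s, OF Zfin Zne Zcnj s_cnj] Zcard by blast
  define Q where "Q = (\<lambda>i j. (if i = j then e else 0) + coeff p i * coeff p j)"
  have symQ: "sym_mat n Q" unfolding sym_mat_def Q_def by auto
  have pdQ: "pos_def_mat n Q" unfolding Q_def using epos by (rule gram_posdef)
  have gramQ: "gram_poly n Q = (\<Sum>k<n. monom e (2*k)) + p * p"
    unfolding Q_def using p(1) by (rule gram_eq)
  define r where "r = g - gram_poly n Q"
  have r_eq: "r = h - p * p" unfolding r_def gramQ h_def by simp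
  have rZ: "poly (rc r) z = 0" if "z \<in> Z" for z
    using s_sq[OF that] p(2)[OF that] unfolding r_eq H_def by (simp add: rc_diff rc_mult)
  define m where "m = r mod f"
  have "rc r = rc f * rc (r div f) + rc m"
    unfolding m_def rc_mult[symmetric] rc_add[symmetric] by simp
  then have mZ: "poly (rc m) z = 0" if "z \<in> Z" for z
    using rZ[OF that] that unfolding Z_def by simp
  have m0: "m = 0"
  proof (rule ccontr)
    assume mnz: "m \<noteq> 0"
    then have dm: "degree m < n" using degree_mod_less[OF fnz, of r] assms(1) unfolding m_def by auto
    have "Z \<subseteq> {z. poly (rc m) z = 0}" using mZ by auto
    moreover have "finite {z. poly (rc m) z = 0}" using mnz rc_eq0 by (intro poly_roots_finite) auto
    ultimately have "card Z \<le> card {z. poly (rc m) z = 0}" by (rule card_mono[rotated])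
    also have "\<dots> \<le> degree (rc m)" using mnz rc_eq0 by (intro card_poly_roots_bound) auto
    finally show False using dm Zcard degree_rc by simp
  qed
  define q where "q = r div f"
  have rq: "r = q * f" using m0 unfolding m_def q_def by (metis div_mult_mod_eq add_0_right)
  have geq: "g = gram_poly n Q + q * f" using rq unfolding r_def by (simp add: algebra_simps)
  have "q = 0 \<or> degree q + 2 \<le> n"
  proof (cases "q = 0")
    case False
    have "degree q + n = degree r" using rq False fnz assms(1) by (simp add: degree_mult_eq)
    also have "\<dots> \<le> max (degree g) (degree (gram_poly n Q))" unfolding r_def by (rule degree_diff_le_max)
    also have "\<dots> \<le> 2*n - 2" using gram_degree[OF npos, of Q] assms(3) by auto
    finally show ?thesis using npos by auto
  qed simp
  then show ?thesis using symQ pdQ geq by blast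
qed
end
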